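(* Let $a,b>0$, $s\in(0,1)$ and $\lambda>0$. Let $\eta$ have prior distribution $F_{a,b}=(1-s)\delta_1+s\,\Pi_{a,b}$, where $\Pi_{a,b}$ is the RSB distribution with density $\pi_{\rm RSB}(\cdot;a,b)$, and let $y\mid\eta\sim\mathrm{Po}(\eta\lambda)$. Define the posterior probability $$P_{a,b}(\varepsilon;\lambda):=\Pr(\eta<\varepsilon\mid y=0;a,b)=\frac{\int_{(0,\varepsilon)}e^{-\lambda\eta}\,F_{a,b}(d\eta)}{\int_{(0,\infty)}e^{-\lambda\eta}\,F_{a,b}(d\eta)}.$$ Then (i) for every $\varepsilon>0$, $\lambda\mapsto P_{a,b}(\varepsilon;\lambda)$ is non-decreasing on $(0,\infty)$; and (ii) if $0<a<1<a'<\infty$ and $s\in(0,1]$, then for every $\lambda>0$, $P_{a,b}(\varepsilon;\lambda)/P_{a',b}(\varepsilon;\lambda)\to\infty$ as $\varepsilon\to0$.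
   Context: For $a,b>0$, $\pi_{\rm RSB}(u;a,b)=\frac{1}{B(a,b)}\frac{\{\log(1+u)\}^{a-1}}{1+u}\frac{1}{\{1+\log(1+u)\}^{a+b}}$, $u>0$. $\delta_1$ is the point mass at $1$. $\mathrm{Po}(\mu)$ is the Poisson distribution with mean $\mu$, so the likelihood of $y=0$ given $\eta$ is $e^{-\lambda\eta}$. *)

theory Defs
  imports "HOL-Analysis.Analysis"
begin

definition pi_RSB :: "real \<Rightarrow> real \<Rightarrow> real \<Rightarrow> real" where
  "pi_RSB a b u = (if u > 0 then
      (1 / Beta a b) * (ln (1 + u)) powr (a - 1) / (1 + u) / (1 + ln (1 + u)) powr (a + b)
    else 0)"

text \<open>Integral of exp(-lambda eta) over a set A against the prior
  F = (1-s) delta_1 + s Pi_{a,b}, with Pi_{a,b} having Lebesgue density pi_RSB.\<close>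
definition prior_lap :: "real \<Rightarrow> real \<Rightarrow> real \<Rightarrow> real \<Rightarrow> real set \<Rightarrow> real" where
  "prior_lap a b s lam A =
     (1 - s) * (if (1::real) \<in> A then exp (- lam * 1) else 0)
     + s * (LINT u:A|lborel. exp (- lam * u) * pi_RSB a b u)"

definition post_prob :: "real \<Rightarrow> real \<Rightarrow> real \<Rightarrow> real \<Rightarrow> real \<Rightarrow> real" where
  "post_prob a b s eps lam = prior_lap a b s lam {0<..<eps} / prior_lap a b s lam {0<..}"

end

theory Submission
  imports Defs "HOL-Real_Asymp.Real_Asymp"
begin

lemma Beta_pos': "0 < a \<Longrightarrow> 0 < b \<Longrightarrow> Beta a b > (0::real)"
  by (simp add: Beta_def)

lemma pi_meas [measurable]: "(pi_RSB a b) \<in> borel_measurable borel"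
  unfolding pi_RSB_def by measurable

lemma pi_nonneg: "0 < a \<Longrightarrow> 0 < b \<Longrightarrow> 0 \<le> pi_RSB a b u"
  unfolding pi_RSB_def using Beta_pos'[of a b] by auto

lemma hk_to_lborel:
  fixes f :: "real \<Rightarrow> real"
  assumes "f integrable_on S" "\<And>x. x \<in> S \<Longrightarrow> 0 \<le> f x" "f \<in> borel_measurable borel" "S \<in> sets borel"
  shows "set_integrable lborel S f"
proof -
  have "set_integrable lebesgue S f"
    by (rule nonnegative_absolutely_integrable_1) (use assms in auto)
  then have "integrable (completion lborel) (\<lambda>x. indicator S x *\<^sub>R f x)"
    unfolding set_integrable_def .
  moreover have "(\<lambda>x. indicator S x *\<^sub>R f x) \<in> borel_measurable lborel"
    using assms by measurable
  ultimately show ?thesis unfolding set_integrable_def using integrable_completion by blast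
qed

lemma powr_int:
  fixes a e :: real
  assumes "a > 0" "e \<ge> 0"
  shows "set_integrable lborel {0<..<e} (\<lambda>u. u powr (a-1))"
    "(LINT u:{0<..<e}|lborel. u powr (a-1)) = e powr a / a"
proof -
  have h: "((\<lambda>x. x powr (a-1)) has_integral (e powr (a-1+1) / (a-1+1))) {0..e}"
    using has_integral_powr_from_0[of "a-1" e] assms by auto
  have n1: "negligible {x \<in> {0..e} - {0<..<e}. x powr (a-1) \<noteq> 0}"
  proof -
    have "{x \<in> {0..e} - {0<..<e}. x powr (a-1) \<noteq> 0} \<subseteq> {0,e}" by auto
    then show ?thesis
      using negligible_subset negligible_finite by (metis finite.emptyI finite_insert)
  qed
  have n2: "negligible {x \<in> {0<..<e} - {0..e}. x powr (a-1) \<noteq> 0}"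
  proof -
    have "{x \<in> {0<..<e} - {0..e}. x powr (a-1) \<noteq> 0} = {}" by auto
    then show ?thesis by (metis negligible_empty)
  qed
  have h2: "((\<lambda>x. x powr (a-1)) has_integral (e powr a / a)) {0<..<e}"
    using has_integral_spike_set_eq[OF n1 n2] h by simp
  show si: "set_integrable lborel {0<..<e} (\<lambda>u. u powr (a-1))"
    by (rule hk_to_lborel) (use h2 in \<open>auto simp: integrable_on_def\<close>)
  show "(LINT u:{0<..<e}|lborel. u powr (a-1)) = e powr a / a"
    using set_borel_integral_eq_integral(2)[OF si] h2 integral_unique by metis
qed

lemma ln_bounds:
  fixes u :: real assumes "0 < u" "u \<le> 1"
  shows "u/2 \<le> ln (1+u)" "ln (1+u) \<le> u"
proof -
  show "ln (1+u) \<le> u" using assms ln_add_one_self_le_self by auto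
  have "ln (1/(1+u)) \<le> 1/(1+u) - 1" using assms by (intro ln_le_minus_one) auto
  then have "u/(1+u) \<le> ln (1+u)" using assms by (simp add: ln_div field_simps)
  moreover have "u/2 \<le> u/(1+u)" using assms by (simp add: field_simps)
  ultimately show "u/2 \<le> ln (1+u)" by linarith
qed

lemma ln_powr_bounds:
  fixes u a :: real assumes "0 < u" "u \<le> 1"
  shows "min 1 (2 powr (1-a)) * u powr (a-1) \<le> ln (1+u) powr (a-1)"
    "ln (1+u) powr (a-1) \<le> max 1 (2 powr (1-a)) * u powr (a-1)"
proof -
  have l1: "u/2 \<le> ln (1+u)" and l2: "ln (1+u) \<le> u" using ln_bounds assms by auto
  have up: "u > 0" "u/2 > 0" using assms by auto
  have e: "(u/2) powr (a-1) = 2 powr (1-a) * u powr (a-1)"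
    using assms by (simp add: powr_divide powr_diff divide_simps powr_minus)
  have pos: "0 \<le> u powr (a-1)" by simp
  have "min 1 (2 powr (1-a)) * u powr (a-1) \<le> ln (1+u) powr (a-1) \<and>
        ln (1+u) powr (a-1) \<le> max 1 (2 powr (1-a)) * u powr (a-1)"
  proof (cases "a \<ge> 1")
    case True
    have "(u/2) powr (a-1) \<le> ln (1+u) powr (a-1)" using True l1 up by (intro powr_mono2) auto
    moreover have "ln (1+u) powr (a-1) \<le> u powr (a-1)" using True l1 l2 up by (intro powr_mono2) auto
    moreover have "min 1 (2 powr (1-a)) \<le> 2 powr (1-a)" "1 \<le> max 1 (2 powr (1-a))" by auto
    ultimately show ?thesis using e pos
      by (smt (verit, ccfv_threshold) mult_right_mono mult_cancel_right2)
  next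
    case False
    have "ln (1+u) powr (a-1) \<le> (u/2) powr (a-1)" using False l1 up by (intro powr_mono2') auto
    moreover have "u powr (a-1) \<le> ln (1+u) powr (a-1)" using False l1 l2 up by (intro powr_mono2') auto
    moreover have "min 1 (2 powr (1-a)) \<le> 1" "2 powr (1-a) \<le> max 1 (2 powr (1-a))" by auto
    ultimately show ?thesis using e pos
      by (smt (verit, ccfv_threshold) mult_right_mono mult_cancel_right2)
  qed
  then show "min 1 (2 powr (1-a)) * u powr (a-1) \<le> ln (1+u) powr (a-1)"
    "ln (1+u) powr (a-1) \<le> max 1 (2 powr (1-a)) * u powr (a-1)" by auto
qed

lemma pi_eq: "0 < u \<Longrightarrow> pi_RSB a b u = ln (1+u) powr (a-1) / (Beta a b * (1+u) * (1 + ln (1+u)) powr (a+b))"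
  unfolding pi_RSB_def by (simp add: field_simps)

lemma pi_upper:
  fixes a b u :: real assumes "0<a" "0<b" "0 < u" "u \<le> 1"
  shows "pi_RSB a b u \<le> max 1 (2 powr (1-a)) / Beta a b * u powr (a-1)"
proof -
  define L where "L = ln (1+u)"
  have L0: "0 < L" using assms by (simp add: L_def)
  have B: "Beta a b > 0" using Beta_pos' assms by auto
  have Q: "1 \<le> (1+L) powr (a+b)" using L0 assms by (intro ge_one_powr_ge_zero) auto
  have P: "0 \<le> L powr (a-1)" by simp
  have "pi_RSB a b u = L powr (a-1) / (Beta a b * (1+u) * (1+L) powr (a+b))"
    using pi_eq assms L_def by simp
  also have "\<dots> \<le> L powr (a-1) / Beta a b"
  proof (rule divide_left_mono[OF _ P])
    have "Beta a b * 1 * 1 \<le> Beta a b * (1+u) * (1+L) powr (a+b)"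
      using B Q assms by (intro mult_mono) auto
    then show "Beta a b \<le> Beta a b * (1+u) * (1+L) powr (a+b)" by simp
    show "0 < (Beta a b * (1+u) * (1+L) powr (a+b)) * Beta a b" using B Q assms by (intro mult_pos_pos) auto
  qed
  also have "\<dots> \<le> max 1 (2 powr (1-a)) * u powr (a-1) / Beta a b"
    using ln_powr_bounds(2)[OF assms(3,4), of a] B L_def by (simp add: divide_right_mono)
  finally show ?thesis by simp
qed

lemma pi_lower:
  fixes a b u :: real assumes "0<a" "0<b" "0 < u" "u \<le> 1"
  shows "min 1 (2 powr (1-a)) / (2 * 2 powr (a+b) * Beta a b) * u powr (a-1) \<le> pi_RSB a b u"
proof -
  define L where "L = ln (1+u)"
  have L0: "0 < L" using assms by (simp add: L_def)
  have L1: "L \<le> 1" using ln_bounds(2)[OF assms(3,4)] assms L_def by simp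
  have B: "Beta a b > 0" using Beta_pos' assms by auto
  have Q: "(1+L) powr (a+b) \<le> 2 powr (a+b)" using L0 L1 assms by (intro powr_mono2) auto
  have Q1: "0 < (1+L) powr (a+b)" using L0 by simp
  have P: "0 \<le> L powr (a-1)" by simp
  have "min 1 (2 powr (1-a)) / (2 * 2 powr (a+b) * Beta a b) * u powr (a-1)
      = (min 1 (2 powr (1-a)) * u powr (a-1)) / (Beta a b * 2 * 2 powr (a+b))" by simp
  also have "\<dots> \<le> L powr (a-1) / (Beta a b * 2 * 2 powr (a+b))"
    using ln_powr_bounds(1)[OF assms(3,4), of a] B L_def by (simp add: divide_right_mono)
  also have "\<dots> \<le> L powr (a-1) / (Beta a b * (1+u) * (1+L) powr (a+b))"
  proof (rule divide_left_mono[OF _ P])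
    show "Beta a b * (1+u) * (1+L) powr (a+b) \<le> Beta a b * 2 * 2 powr (a+b)"
      using B Q Q1 assms by (intro mult_mono) auto
    show "0 < Beta a b * 2 * 2 powr (a + b) * (Beta a b * (1 + u) * (1 + L) powr (a + b))"
      using B Q1 assms by (intro mult_pos_pos) auto
  qed
  also have "\<dots> = pi_RSB a b u" using pi_eq assms L_def by simp
  finally show ?thesis .
qed

lemma pi_tail:
  fixes a b u :: real assumes "0<a" "0<b" "1 \<le> u"
  shows "pi_RSB a b u \<le> max 1 (ln 2 powr (a-1)) / Beta a b"
proof -
  define L where "L = ln (1+u)"
  have L2: "ln 2 \<le> L" using assms by (simp add: L_def)
  have l2: "0 < ln (2::real)" by simp
  have L0: "0 < L" using L2 l2 by linarith
  have B: "Beta a b > 0" using Beta_pos' assms by auto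
  have Q: "1 \<le> (1+L) powr (a+b)" using L0 assms by (intro ge_one_powr_ge_zero) auto
  have P: "0 \<le> L powr (a-1)" by simp
  have key: "L powr (a-1) \<le> max 1 (ln 2 powr (a-1)) * (1+L) powr (a+b)"
  proof (cases "a \<ge> 1")
    case True
    have "L powr (a-1) \<le> (1+L) powr (a-1)" using True L0 by (intro powr_mono2) auto
    also have "\<dots> \<le> (1+L) powr (a+b)" using assms L0 by (intro powr_mono) auto
    also have "\<dots> \<le> max 1 (ln 2 powr (a-1)) * (1+L) powr (a+b)"
      using Q mult_right_mono[of 1 "max 1 (ln 2 powr (a-1))" "(1+L) powr (a+b)"] by simp
    finally show ?thesis .
  next
    case False
    have "L powr (a-1) \<le> ln 2 powr (a-1)" using False L2 l2 by (intro powr_mono2') auto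
    also have "\<dots> \<le> max 1 (ln 2 powr (a-1)) * 1" by simp
    also have "\<dots> \<le> max 1 (ln 2 powr (a-1)) * (1+L) powr (a+b)"
      using Q by (intro mult_left_mono) auto
    finally show ?thesis .
  qed
  have "pi_RSB a b u = L powr (a-1) / (Beta a b * (1+u) * (1+L) powr (a+b))"
    using pi_eq assms L_def by simp
  also have "\<dots> \<le> L powr (a-1) / (Beta a b * (1+L) powr (a+b))"
  proof (rule divide_left_mono[OF _ P])
    have "Beta a b * 1 * (1+L) powr (a+b) \<le> Beta a b * (1+u) * (1+L) powr (a+b)"
      using B Q assms by (intro mult_mono) auto
    then show "Beta a b * (1+L) powr (a+b) \<le> Beta a b * (1+u) * (1+L) powr (a+b)" by simp
    show "0 < (Beta a b * (1+u) * (1+L) powr (a+b)) * (Beta a b * (1+L) powr (a+b))" using B Q assms by (intro mult_pos_pos) auto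
  qed
  also have "\<dots> \<le> max 1 (ln 2 powr (a-1)) / Beta a b"
    using key B Q L0 by (simp add: divide_simps mult.commute)
  finally show ?thesis .
qed

lemma g_meas [measurable]: "(\<lambda>u. exp (- lam * u) * pi_RSB a b u) \<in> borel_measurable borel"
  by measurable

lemma integ:
  fixes a b lam :: real assumes "0<a" "0<b" "0<lam"
  shows "set_integrable lborel {0<..} (\<lambda>u. exp (- lam * u) * pi_RSB a b u)"
proof -
  have B: "Beta a b > 0" using Beta_pos' assms by auto
  define K1 where "K1 = max 1 (2 powr (1-a)) / Beta a b"
  define K3 where "K3 = max 1 (ln 2 powr (a-1)) / Beta a b"
  have K1: "K1 > 0" "K3 > 0" using B by (auto simp: K1_def K3_def)
  have s1: "set_integrable lborel {0<..<1} (\<lambda>u. exp (- lam * u) * pi_RSB a b u)"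
  proof (rule set_integrable_bound[where f="\<lambda>u. K1 * u powr (a-1)"])
    show "set_integrable lborel {0<..<1} (\<lambda>u. K1 * u powr (a-1))"
      using powr_int(1)[of a 1] assms by auto
    show "set_borel_measurable lborel {0<..<1} (\<lambda>u. exp (- lam * u) * pi_RSB a b u)"
      unfolding set_borel_measurable_def by measurable
    show "AE x in lborel. x \<in> {0<..<1} \<longrightarrow> norm (exp (- lam * x) * pi_RSB a b x) \<le> norm (K1 * x powr (a-1))"
    proof (rule AE_I2, rule impI)
      fix x :: real assume x: "x \<in> {0<..<1}"
      have e: "exp (- lam * x) \<le> 1" using x assms by simp
      have p: "0 \<le> pi_RSB a b x" using pi_nonneg assms by auto
      have "exp (- lam * x) * pi_RSB a b x \<le> 1 * pi_RSB a b x" using e p by (intro mult_right_mono) auto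
      also have "\<dots> \<le> K1 * x powr (a-1)" using pi_upper[of a b x] x assms by (simp add: K1_def)
      finally show "norm (exp (- lam * x) * pi_RSB a b x) \<le> norm (K1 * x powr (a-1))"
        using p K1 by simp
    qed
  qed
  have s2: "set_integrable lborel {1..} (\<lambda>u. exp (- lam * u) * pi_RSB a b u)"
  proof (rule set_integrable_bound[where f="\<lambda>u. K3 * exp (- lam * u)"])
    have "set_integrable lborel {1..} (\<lambda>u. exp (- lam * u))"
      by (rule hk_to_lborel) (use integrable_on_exp_minus_to_infinity assms in auto)
    then show "set_integrable lborel {1..} (\<lambda>u. K3 * exp (- lam * u))" by auto
    show "set_borel_measurable lborel {1..} (\<lambda>u. exp (- lam * u) * pi_RSB a b u)"
      unfolding set_borel_measurable_def by measurable
    show "AE x in lborel. x \<in> {1..} \<longrightarrow> norm (exp (- lam * x) * pi_RSB a b x) \<le> norm (K3 * exp (- lam * x))"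
    proof (rule AE_I2, rule impI)
      fix x :: real assume x: "x \<in> {1..}"
      have p: "0 \<le> pi_RSB a b x" using pi_nonneg assms by auto
      have "exp (- lam * x) * pi_RSB a b x \<le> exp (- lam * x) * K3"
        using pi_tail[of a b x] x assms by (intro mult_left_mono) (auto simp: K3_def)
      then show "norm (exp (- lam * x) * pi_RSB a b x) \<le> norm (K3 * exp (- lam * x))"
        using p K1 by (simp add: mult.commute)
    qed
  qed
  have "{0<..} = {0<..<1} \<union> {1::real..}" by auto
  then show ?thesis using set_integrable_Un[OF s1 s2] by simp
qed

lemma integ_sub:
  fixes a b lam :: real assumes "0<a" "0<b" "0<lam" "A \<subseteq> {0<..}" "A \<in> sets borel"
  shows "set_integrable lborel A (\<lambda>u. exp (- lam * u) * pi_RSB a b u)"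
  using set_integrable_subset[OF integ[OF assms(1-3)]] assms by auto

lemma int_nonneg:
  fixes a b lam :: real and A :: "real set" assumes "0<a" "0<b"
  shows "0 \<le> (LINT u:A|lborel. exp (- lam * u) * pi_RSB a b u)"
  unfolding set_lebesgue_integral_def
  by (rule Bochner_Integration.integral_nonneg) (use pi_nonneg[OF assms] in \<open>auto simp: indicator_def\<close>)

lemma lap_nonneg:
  fixes a b s lam :: real and A :: "real set" assumes "0<a" "0<b" "0 \<le> s" "s \<le> 1"
  shows "0 \<le> prior_lap a b s lam A"
  unfolding prior_lap_def using int_nonneg[OF assms(1,2), where lam=lam and A=A] assms by auto

lemma lap_split:
  fixes a b s lam eps :: real assumes "0<a" "0<b" "0<lam" "0<eps"
  shows "prior_lap a b s lam {0<..} = prior_lap a b s lam {0<..<eps} + prior_lap a b s lam {eps..}"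
proof -
  have U: "{0<..} = {0<..<eps} \<union> {eps..}" using assms by auto
  have i1: "set_integrable lborel {0<..<eps} (\<lambda>u. exp (- lam * u) * pi_RSB a b u)"
    by (rule integ_sub) (use assms in auto)
  have i2: "set_integrable lborel {eps..} (\<lambda>u. exp (- lam * u) * pi_RSB a b u)"
    by (rule integ_sub) (use assms in auto)
  have "(LINT u:{0<..}|lborel. exp (- lam * u) * pi_RSB a b u) =
        (LINT u:{0<..<eps}|lborel. exp (- lam * u) * pi_RSB a b u) + (LINT u:{eps..}|lborel. exp (- lam * u) * pi_RSB a b u)"
    unfolding U by (rule set_integral_Un[OF _ i1 i2]) auto
  then show ?thesis unfolding prior_lap_def by (auto simp: algebra_simps)
qed

lemma exp_cmp:
  fixes l1 l2 eps u :: real assumes "l1 \<le> l2"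
  shows "u \<le> eps \<Longrightarrow> exp (-(l2-l1)*eps) * exp (-l1*u) \<le> exp (-l2*u)"
    "eps \<le> u \<Longrightarrow> exp (-l2*u) \<le> exp (-(l2-l1)*eps) * exp (-l1*u)"
proof -
  assume "u \<le> eps"
  then have h: "(l2-l1)*(eps-u) \<ge> 0" using assms by simp
  have "-(l2-l1)*eps + -l1*u \<le> -l2*u" using h by (simp add: algebra_simps)
  then show "exp (-(l2-l1)*eps) * exp (-l1*u) \<le> exp (-l2*u)" by (simp add: exp_add[symmetric])
next
  assume "eps \<le> u"
  then have h: "(l2-l1)*(u-eps) \<ge> 0" using assms by simp
  have "-l2*u \<le> -(l2-l1)*eps + -l1*u" using h by (simp add: algebra_simps)
  then show "exp (-l2*u) \<le> exp (-(l2-l1)*eps) * exp (-l1*u)" by (simp add: exp_add[symmetric])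
qed

lemma frac_mono_aux:
  fixes N1 M1 N2 M2 c :: real
  assumes "0 \<le> N1" "0 \<le> M1" "0 \<le> N2" "0 \<le> M2" "0 < N1 + M1" "0 < N2 + M2" "0 < c"
    "c * N1 \<le> N2" "M2 \<le> c * M1"
  shows "N1 / (N1 + M1) \<le> N2 / (N2 + M2)"
proof -
  have "N1 * M2 \<le> N1 * (c * M1)" using assms by (intro mult_left_mono) auto
  also have "\<dots> = (c * N1) * M1" by simp
  also have "\<dots> \<le> N2 * M1" using assms by (intro mult_right_mono) auto
  finally have "N1 * (N2 + M2) \<le> N2 * (N1 + M1)" by (simp add: algebra_simps)
  then show ?thesis using assms by (simp add: divide_simps)
qed

lemma part1:
  fixes a b s eps :: real
  assumes "0<a" "0<b" "0<s" "s<1" "0<eps"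
  shows "mono_on {0<..} (\<lambda>lam. post_prob a b s eps lam)"
proof (rule mono_onI)
  fix l1 l2 :: real assume l: "l1 \<in> {0<..}" "l2 \<in> {0<..}" "l1 \<le> l2"
  define c where "c = exp (-(l2-l1)*eps)"
  have c0: "c > 0" by (simp add: c_def)
  define I where "I = (\<lambda>l A. LINT u:A|lborel. exp (- l * u) * pi_RSB a b u)"
  have intg: "set_integrable lborel A (\<lambda>u. exp (- l * u) * pi_RSB a b u)"
    if "l > 0" "A \<subseteq> {0<..}" "A \<in> sets borel" for l A
    using integ_sub[of a b l A] that assms by auto
  have pi0: "\<And>u. 0 \<le> pi_RSB a b u" using pi_nonneg assms by auto
  have IN: "c * I l1 {0<..<eps} \<le> I l2 {0<..<eps}"
  proof -
    have "c * I l1 {0<..<eps} = (LINT u:{0<..<eps}|lborel. c * (exp (- l1 * u) * pi_RSB a b u))"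
      by (simp add: I_def)
    also have "\<dots> \<le> I l2 {0<..<eps}"
      unfolding I_def
    proof (rule set_integral_mono)
      show "set_integrable lborel {0<..<eps} (\<lambda>u. c * (exp (- l1 * u) * pi_RSB a b u))"
        by (intro set_integrable_mult_right intg) (use l in auto)
      show "set_integrable lborel {0<..<eps} (\<lambda>u. exp (- l2 * u) * pi_RSB a b u)"
        by (intro intg) (use l assms in auto)
      fix u assume "u \<in> {0<..<eps}"
      then have "c * exp (- l1 * u) \<le> exp (- l2 * u)" using exp_cmp(1)[OF l(3), of u eps] by (simp add: c_def)
      then show "c * (exp (- l1 * u) * pi_RSB a b u) \<le> exp (- l2 * u) * pi_RSB a b u"
        using pi0[of u] mult_right_mono by (metis mult.assoc)
    qed
    finally show ?thesis .
  qed
  have IM: "I l2 {eps..} \<le> c * I l1 {eps..}"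
  proof -
    have "I l2 {eps..} \<le> (LINT u:{eps..}|lborel. c * (exp (- l1 * u) * pi_RSB a b u))"
      unfolding I_def
    proof (rule set_integral_mono)
      show "set_integrable lborel {eps..} (\<lambda>u. c * (exp (- l1 * u) * pi_RSB a b u))"
        by (intro set_integrable_mult_right intg) (use l assms in auto)
      show "set_integrable lborel {eps..} (\<lambda>u. exp (- l2 * u) * pi_RSB a b u)"
        by (intro intg) (use l assms in auto)
      fix u assume "u \<in> {eps..}"
      then have "exp (- l2 * u) \<le> c * exp (- l1 * u)" using exp_cmp(2)[OF l(3), of eps u] by (simp add: c_def)
      then show "exp (- l2 * u) * pi_RSB a b u \<le> c * (exp (- l1 * u) * pi_RSB a b u)"
        using pi0[of u] mult_right_mono by (metis mult.assoc)
    qed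
    also have "\<dots> = c * I l1 {eps..}" by (simp add: I_def)
    finally show ?thesis .
  qed
  have P1: "c * exp (- l1 * 1) \<le> exp (- l2 * 1)" if "1 < eps"
    using exp_cmp(1)[OF l(3), of 1 eps] that by (simp add: c_def)
  have P2: "exp (- l2 * 1) \<le> c * exp (- l1 * 1)" if "\<not> 1 < eps"
    using exp_cmp(2)[OF l(3), of eps 1] that by (simp add: c_def)
  define N where "N = (\<lambda>l. prior_lap a b s l {0<..<eps})"
  define M where "M = (\<lambda>l. prior_lap a b s l {eps..})"
  have NM: "N l = (1-s) * (if 1 < eps then exp (- l * 1) else 0) + s * I l {0<..<eps}"
    "M l = (1-s) * (if 1 < eps then 0 else exp (- l * 1)) + s * I l {eps..}" for l
    by (auto simp: N_def M_def prior_lap_def I_def)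
  have cN: "c * N l1 \<le> N l2"
  proof -
    have "c * N l1 = (1-s) * (if 1 < eps then c * exp (- l1 * 1) else 0) + s * (c * I l1 {0<..<eps})"
      unfolding NM by (simp add: algebra_simps)
    also have "\<dots> \<le> N l2" unfolding NM
      using P1 IN assms by (intro add_mono mult_left_mono) auto
    finally show ?thesis .
  qed
  have cM: "M l2 \<le> c * M l1"
  proof -
    have "c * M l1 = (1-s) * (if 1 < eps then 0 else c * exp (- l1 * 1)) + s * (c * I l1 {eps..})"
      unfolding NM by (simp add: algebra_simps)
    moreover have "M l2 \<le> \<dots>" unfolding NM
      using P2 IM assms by (intro add_mono mult_left_mono) auto
    ultimately show ?thesis by simp
  qed
  have pos: "0 < N l + M l" if "l > 0" for l
  proof -
    have "0 \<le> I l {0<..<eps}" "0 \<le> I l {eps..}" using int_nonneg assms by (auto simp: I_def)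
    then have h: "0 \<le> s * I l {0<..<eps}" "0 \<le> s * I l {eps..}" using assms by auto
    have e: "0 < (1-s) * exp (- l * 1)" using assms by simp
    show ?thesis
    proof (cases "1 < eps")
      case True
      then show ?thesis unfolding NM using h e by simp
    next
      case False
      then show ?thesis unfolding NM using h e by simp
    qed
  qed
  have nn: "0 \<le> N l" "0 \<le> M l" for l unfolding N_def M_def using lap_nonneg assms by auto
  have D: "prior_lap a b s l {0<..} = N l + M l" if "l > 0" for l
    using lap_split[of a b l eps s] assms that by (simp add: N_def M_def)
  have "N l1 / (N l1 + M l1) \<le> N l2 / (N l2 + M l2)"
    by (rule frac_mono_aux[OF nn(1) nn(2) nn(1) nn(2) pos pos c0 cN cM]) (use l in auto)
  then show "post_prob a b s eps l1 \<le> post_prob a b s eps l2"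
    unfolding post_prob_def using D l by (simp add: N_def)
qed

lemma int_lower:
  fixes a b lam eps :: real assumes "0<a" "0<b" "0<lam" "0<eps" "eps \<le> 1"
  shows "exp (-lam) * (min 1 (2 powr (1-a)) / (2 * 2 powr (a+b) * Beta a b)) * (eps powr a / a)
         \<le> (LINT u:{0<..<eps}|lborel. exp (- lam * u) * pi_RSB a b u)"
proof -
  define K where "K = min 1 (2 powr (1-a)) / (2 * 2 powr (a+b) * Beta a b)"
  have K0: "K > 0" using Beta_pos'[OF assms(1,2)] by (simp add: K_def)
  have "exp (-lam) * K * (eps powr a / a) = (LINT u:{0<..<eps}|lborel. exp (-lam) * K * u powr (a-1))"
    using powr_int(2)[of a eps] assms by simp
  also have "\<dots> \<le> (LINT u:{0<..<eps}|lborel. exp (- lam * u) * pi_RSB a b u)"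
  proof (rule set_integral_mono)
    show "set_integrable lborel {0<..<eps} (\<lambda>u. exp (-lam) * K * u powr (a-1))"
      using powr_int(1)[of a eps] assms by (intro set_integrable_mult_right) auto
    show "set_integrable lborel {0<..<eps} (\<lambda>u. exp (- lam * u) * pi_RSB a b u)"
      by (rule integ_sub) (use assms in auto)
    fix u assume u: "u \<in> {0<..<eps}"
    have e: "exp (-lam) \<le> exp (- lam * u)" using u assms by (simp add: mult_left_le)
    have p: "K * u powr (a-1) \<le> pi_RSB a b u" using pi_lower[of a b u] u assms by (simp add: K_def)
    have "exp (-lam) * (K * u powr (a-1)) \<le> exp (- lam * u) * pi_RSB a b u"
      using e p K0 by (intro mult_mono) auto
    then show "exp (-lam) * K * u powr (a-1) \<le> exp (- lam * u) * pi_RSB a b u" by (simp add: mult.assoc)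
  qed
  finally show ?thesis by (simp add: K_def)
qed

lemma int_upper:
  fixes a b lam eps :: real assumes "0<a" "0<b" "0<lam" "0<eps" "eps \<le> 1"
  shows "(LINT u:{0<..<eps}|lborel. exp (- lam * u) * pi_RSB a b u)
         \<le> max 1 (2 powr (1-a)) / Beta a b * (eps powr a / a)"
proof -
  define K where "K = max 1 (2 powr (1-a)) / Beta a b"
  have "(LINT u:{0<..<eps}|lborel. exp (- lam * u) * pi_RSB a b u) \<le> (LINT u:{0<..<eps}|lborel. K * u powr (a-1))"
  proof (rule set_integral_mono)
    show "set_integrable lborel {0<..<eps} (\<lambda>u. K * u powr (a-1))"
      using powr_int(1)[of a eps] assms by (intro set_integrable_mult_right) auto
    show "set_integrable lborel {0<..<eps} (\<lambda>u. exp (- lam * u) * pi_RSB a b u)"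
      by (rule integ_sub) (use assms in auto)
    fix u assume u: "u \<in> {0<..<eps}"
    have e: "exp (- lam * u) \<le> 1" using u assms by simp
    have p0: "0 \<le> pi_RSB a b u" using pi_nonneg assms by auto
    have "exp (- lam * u) * pi_RSB a b u \<le> 1 * pi_RSB a b u" using e p0 by (intro mult_right_mono) auto
    also have "\<dots> \<le> K * u powr (a-1)" using pi_upper[of a b u] u assms by (simp add: K_def)
    finally show "exp (- lam * u) * pi_RSB a b u \<le> K * u powr (a-1)" .
  qed
  also have "\<dots> = K * (eps powr a / a)" using powr_int(2)[of a eps] assms by simp
  finally show ?thesis by (simp add: K_def)
qed

lemma D_pos:
  fixes a b s lam :: real assumes "0<a" "0<b" "0<s" "s\<le>1" "0<lam"
  shows "0 < prior_lap a b s lam {0<..}"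
proof -
  define KL where "KL = min 1 (2 powr (1-a)) / (2 * 2 powr (a+b) * Beta a b)"
  have K0: "KL > 0" using Beta_pos'[OF assms(1,2)] by (simp add: KL_def)
  have l: "0 < exp (-lam) * KL * ((1/2) powr a / a)" using K0 assms by simp
  also have "\<dots> \<le> (LINT u:{0<..<1/2}|lborel. exp (- lam * u) * pi_RSB a b u)"
    using int_lower[of a b lam "1/2"] assms by (simp add: KL_def)
  finally have "0 < s * (LINT u:{0<..<1/2}|lborel. exp (- lam * u) * pi_RSB a b u)" using assms by simp
  moreover have "prior_lap a b s lam {0<..<1/2} = s * (LINT u:{0<..<1/2}|lborel. exp (- lam * u) * pi_RSB a b u)"
    by (simp add: prior_lap_def)
  moreover have "0 \<le> prior_lap a b s lam {1/2..}" using lap_nonneg assms by auto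
  moreover have "prior_lap a b s lam {0<..} = prior_lap a b s lam {0<..<1/2} + prior_lap a b s lam {1/2..}"
    using lap_split[of a b lam "1/2" s] assms by simp
  ultimately show ?thesis by linarith
qed

lemma part2:
  fixes a a' b s lam :: real
  assumes "0 < a" "a < 1" "1 < a'" "0 < b" "0 < s" "s \<le> 1" "0 < lam"
  shows "filterlim (\<lambda>eps. post_prob a b s eps lam / post_prob a' b s eps lam) at_top (at_right 0)"
proof -
  have a': "0 < a'" using assms by simp
  define Da where "Da = prior_lap a b s lam {0<..}"
  define Da' where "Da' = prior_lap a' b s lam {0<..}"
  have Da: "Da > 0" "Da' > 0" unfolding Da_def Da'_def using D_pos assms a' by auto
  define c1 where "c1 = exp (-lam) * (min 1 (2 powr (1-a)) / (2 * 2 powr (a+b) * Beta a b)) / a"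
  define c1' where "c1' = exp (-lam) * (min 1 (2 powr (1-a')) / (2 * 2 powr (a'+b) * Beta a' b)) / a'"
  define c2 where "c2 = max 1 (2 powr (1-a')) / Beta a' b / a'"
  have c: "c1 > 0" "c1' > 0" "c2 > 0" using Beta_pos'[OF assms(1,4)] Beta_pos'[OF a' assms(4)] assms a'
    by (auto simp: c1_def c1'_def c2_def)
  define C where "C = (c1 * Da') / (c2 * Da)"
  have C: "C > 0" using c Da by (simp add: C_def)
  have ev: "eventually (\<lambda>eps. C * eps powr (a - a') \<le> post_prob a b s eps lam / post_prob a' b s eps lam) (at_right 0)"
  proof -
    have "eventually (\<lambda>eps::real. eps \<in> {0<..<1}) (at_right 0)"
      by (simp add: eventually_at_right_field) (metis zero_less_one)
    then show ?thesis
    proof (rule eventually_mono)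
      fix eps :: real assume e: "eps \<in> {0<..<1}"
      define Ia where "Ia = (LINT u:{0<..<eps}|lborel. exp (- lam * u) * pi_RSB a b u)"
      define Ia' where "Ia' = (LINT u:{0<..<eps}|lborel. exp (- lam * u) * pi_RSB a' b u)"
      have pa: "post_prob a b s eps lam = s * Ia / Da"
        using e by (simp add: post_prob_def prior_lap_def Ia_def Da_def)
      have pa': "post_prob a' b s eps lam = s * Ia' / Da'"
        using e by (simp add: post_prob_def prior_lap_def Ia'_def Da'_def)
      have ep: "eps powr a > 0" "eps powr a' > 0" using e by auto
      have l1: "c1 * eps powr a \<le> Ia" using int_lower[of a b lam eps] assms e
        by (simp add: Ia_def c1_def)
      have l1': "c1' * eps powr a' \<le> Ia'" using int_lower[of a' b lam eps] assms e a'
        by (simp add: Ia'_def c1'_def)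
      have u2: "Ia' \<le> c2 * eps powr a'" using int_upper[of a' b lam eps] assms e a'
        by (simp add: Ia'_def c2_def)
      have Ia'0: "0 < Ia'" using l1' c ep by (smt (verit) mult_pos_pos)
      have "(s * (c1 * eps powr a) / Da) / (s * (c2 * eps powr a') / Da') \<le> (s * Ia / Da) / (s * Ia' / Da')"
      proof (rule frac_le)
        show "0 \<le> s * Ia / Da" using l1 c ep Da assms by (smt (verit) divide_nonneg_pos mult_nonneg_nonneg)
        show "s * (c1 * eps powr a) / Da \<le> s * Ia / Da" using l1 Da assms by (intro divide_right_mono mult_left_mono) auto
        show "0 < s * Ia' / Da'" using Ia'0 Da assms by simp
        show "s * Ia' / Da' \<le> s * (c2 * eps powr a') / Da'" using u2 Da assms by (intro divide_right_mono mult_left_mono) auto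
      qed
      moreover have "(s * (c1 * eps powr a) / Da) / (s * (c2 * eps powr a') / Da') = C * eps powr (a - a')"
        using assms Da c ep by (simp add: C_def powr_diff field_simps)
      ultimately show "C * eps powr (a - a') \<le> post_prob a b s eps lam / post_prob a' b s eps lam"
        using pa pa' by simp
    qed
  qed
  have lim0: "filterlim (\<lambda>x::real. x powr (a - a')) at_top (at_right 0)"
    using assms by real_asymp
  have "filterlim (\<lambda>x::real. C * x powr (a - a')) at_top (at_right 0)"
    by (rule filterlim_tendsto_pos_mult_at_top[OF tendsto_const C lim0])
  then show ?thesis by (rule filterlim_at_top_mono[OF _ ev])
qed

theorem theorem2:
  shows "(\<forall>a b s eps. 0 < a \<longrightarrow> 0 < b \<longrightarrow> 0 < s \<longrightarrow> s < 1 \<longrightarrow> 0 < eps \<longrightarrow>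
            mono_on {0<..} (\<lambda>lam. post_prob a b s eps lam))
       \<and> (\<forall>a a' b s lam. 0 < a \<longrightarrow> a < 1 \<longrightarrow> 1 < a' \<longrightarrow> 0 < b \<longrightarrow> 0 < s \<longrightarrow> s \<le> 1 \<longrightarrow> 0 < lam \<longrightarrow>
            filterlim (\<lambda>eps. post_prob a b s eps lam / post_prob a' b s eps lam) at_top (at_right 0))"
  using part1 part2 by blast

end
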